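(* Let $p\geqslant 1$ and let $n_0,\dots,n_{p-1}>1$ be natural numbers; let $n$ be their least common multiple, and for $i\neq j$ let $d_{i,j}$ be the greatest common divisor of $n_i$ and $n_j$. Let $c_0,\dots,c_{p-1}$ be integers with $\sum_{i<p}c_i\,(n/n_i)=1$. Then for all positive rational numbers $t_0,\dots,t_{p-1}$ and $x$, putting $\beta=\prod_{i<p}t_i^{c_i(n/n_i)}$, we have $$\bigwedge_{i<p}\Re_{n_i}(x\cdot t_i)\iff \Re_n(x\cdot\beta)\wedge\bigwedge_{i\neq j}\Re_{d_{i,j}}(t_i\cdot t_j^{-1}).$$
   Context: For a natural number $k\geqslant 1$ and a positive rational $y$, $\Re_k(y)$ means that there exists a positive rational $x$ with $y=x^k$ (so $\Re_1(y)$ always holds). *)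

theory Defs
  imports Complex_Main
begin

definition is_pow :: "nat \<Rightarrow> rat \<Rightarrow> bool" where
  "is_pow k y \<longleftrightarrow> (\<exists>x::rat. x > 0 \<and> y = x ^ k)"

end

theory Submission
  imports Defs
begin

lemma pow_mult: "is_pow k a \<Longrightarrow> is_pow k b \<Longrightarrow> is_pow k (a * b)"
  unfolding is_pow_def by (metis mult_pos_pos power_mult_distrib)

lemma pow_one: "is_pow k 1"
  unfolding is_pow_def by (intro exI[of _ 1]) simp

lemma pow_prod: "finite A \<Longrightarrow> (\<And>j. j \<in> A \<Longrightarrow> is_pow k (f j)) \<Longrightarrow> is_pow k (prod f A)"
  by (induction A rule: finite_induct) (auto intro: pow_mult pow_one)

lemma pow_powi:
  assumes "is_pow d a" "int k dvd int d * e"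
  shows "is_pow k (a powi e)"
proof -
  obtain w :: rat where w: "w > 0" "a = w ^ d" using assms(1) unfolding is_pow_def by blast
  obtain q where q: "int d * e = int k * q" using assms(2) by (auto elim: dvdE)
  have "a powi e = w powi (int d * e)" using w by (simp add: power_int_power)
  also have "\<dots> = (w powi q) ^ k" using q by (simp add: power_int_power' mult.commute)
  finally show ?thesis unfolding is_pow_def using w by (intro exI[of _ "w powi q"]) simp
qed

lemma powi_sum: "finite A \<Longrightarrow> (a::rat) \<noteq> 0 \<Longrightarrow> a powi (\<Sum>j\<in>A. e j) = (\<Prod>j\<in>A. a powi e j)"
  by (induction A rule: finite_induct) (auto simp: power_int_add)

lemma prod_ident:
  assumes "(a::rat) \<noteq> 0" "finite A" "(\<Sum>j\<in>A. e j) = 1"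
  shows "(\<Prod>j\<in>A. (a * b j) powi e j) = a * (\<Prod>j\<in>A. b j powi e j)"
proof -
  have "(\<Prod>j\<in>A. (a * b j) powi e j) = (\<Prod>j\<in>A. a powi e j) * (\<Prod>j\<in>A. b j powi e j)"
    by (simp add: power_int_mult_distrib prod.distrib)
  also have "(\<Prod>j\<in>A. a powi e j) = a" using powi_sum[OF assms(2,1), of e] assms(3) by simp
  finally show ?thesis .
qed

lemma prod_inv: "(\<Prod>j\<in>A. inverse (b j :: rat) powi e j) = inverse (\<Prod>j\<in>A. b j powi e j)"
  by (induction A rule: infinite_finite_induct) (auto simp: power_int_inverse)

theorem lemma2:
  fixes p :: nat and ns :: "nat \<Rightarrow> nat" and c :: "nat \<Rightarrow> int"
    and t :: "nat \<Rightarrow> rat" and x :: rat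
  assumes "p \<ge> 1"
    and "\<And>i. i < p \<Longrightarrow> ns i > 1"
    and "(\<Sum>i<p. c i * int (Lcm (ns ` {..<p}) div ns i)) = 1"
    and "\<And>i. i < p \<Longrightarrow> t i > 0"
    and "x > 0"
  shows "(\<forall>i<p. is_pow (ns i) (x * t i)) \<longleftrightarrow>
         (is_pow (Lcm (ns ` {..<p}))
            (x * (\<Prod>i<p. t i powi (c i * int (Lcm (ns ` {..<p}) div ns i))))
          \<and> (\<forall>i<p. \<forall>j<p. i \<noteq> j \<longrightarrow> is_pow (gcd (ns i) (ns j)) (t i * inverse (t j))))"
proof -
  define n where "n = Lcm (ns ` {..<p})"
  define e where "e i = c i * int (n div ns i)" for i
  have sum1: "(\<Sum>i<p. e i) = 1" using assms(3) by (simp add: e_def n_def)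
  have dvdn: "ns i dvd n" if "i < p" for i using that unfolding n_def by (simp add: dvd_Lcm)
  have mul: "ns i * (n div ns i) = n" if "i < p" for i using dvdn[OF that] by simp
  have key: "ns i dvd gcd (ns i) (ns j) * (n div ns j)" if "i < p" "j < p" for i j
  proof -
    have "lcm (ns i) (ns j) dvd n" using dvdn that by simp
    hence "gcd (ns i) (ns j) * lcm (ns i) (ns j) dvd gcd (ns i) (ns j) * n" by (rule mult_dvd_mono[OF dvd_refl])
    moreover have "gcd (ns i) (ns j) * lcm (ns i) (ns j) = ns j * ns i"
      by (simp add: gcd_mult_lcm mult.commute)
    moreover have "gcd (ns i) (ns j) * n = ns j * (gcd (ns i) (ns j) * (n div ns j))"
      using mul[OF that(2)] by (metis mult.left_commute)
    ultimately have "ns j * ns i dvd ns j * (gcd (ns i) (ns j) * (n div ns j))"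
      by simp
    moreover have "ns j > 0" using assms(2) that by fastforce
    ultimately show ?thesis by simp
  qed
  have posprod: "(\<Prod>i<p. t i powi e i) > 0" using assms(4) by (intro prod_pos) simp
  show ?thesis unfolding n_def[symmetric] e_def[symmetric]
  proof
    assume H: "\<forall>i<p. is_pow (ns i) (x * t i)"
    have "x * (\<Prod>i<p. t i powi e i) = (\<Prod>i<p. (x * t i) powi e i)"
      using prod_ident[of x "{..<p}" e t] sum1 assms(5) by simp
    moreover have "is_pow n (\<Prod>i<p. (x * t i) powi e i)"
    proof (rule pow_prod)
      fix i assume "i \<in> {..<p}"
      hence i: "i < p" by simp
      have "int (ns i) * e i = c i * int (ns i * (n div ns i))"
        unfolding e_def by (simp only: of_nat_mult mult.left_commute)
      hence "int (ns i) * e i = c i * int n" using mul[OF i] by simp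
      hence "int n dvd int (ns i) * e i" by simp
      thus "is_pow n ((x * t i) powi e i)" using H i by (intro pow_powi) auto
    qed simp
    ultimately have A: "is_pow n (x * (\<Prod>i<p. t i powi e i))" by simp
    have B: "is_pow (gcd (ns i) (ns j)) (t i * inverse (t j))" if ij: "i < p" "j < p" for i j
    proof -
      obtain yi where yi: "yi > 0" "x * t i = yi ^ ns i" using H ij unfolding is_pow_def by blast
      obtain yj where yj: "yj > 0" "x * t j = yj ^ ns j" using H ij unfolding is_pow_def by blast
      define g where "g = gcd (ns i) (ns j)"
      obtain a where a: "ns i = g * a" unfolding g_def by (metis gcd_dvd1 dvdE)
      obtain b where b: "ns j = g * b" unfolding g_def by (metis gcd_dvd2 dvdE)
      have "t i * inverse (t j) = (x * t i) * inverse (x * t j)" using assms(5) by simp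
      also have "\<dots> = (yi ^ a * inverse (yj ^ b)) ^ g"
        using yi yj a b by (simp add: power_mult power_mult_distrib power_inverse mult.commute)
      finally show ?thesis unfolding is_pow_def g_def[symmetric] using yi yj
        by (intro exI[of _ "yi ^ a * inverse (yj ^ b)"]) simp
    qed
    show "is_pow n (x * (\<Prod>i<p. t i powi e i)) \<and>
      (\<forall>i<p. \<forall>j<p. i \<noteq> j \<longrightarrow> is_pow (gcd (ns i) (ns j)) (t i * inverse (t j)))"
      using A B by blast
  next
    assume H: "is_pow n (x * (\<Prod>i<p. t i powi e i)) \<and>
      (\<forall>i<p. \<forall>j<p. i \<noteq> j \<longrightarrow> is_pow (gcd (ns i) (ns j)) (t i * inverse (t j)))"
    show "\<forall>i<p. is_pow (ns i) (x * t i)"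
    proof (intro allI impI)
      fix i assume i: "i < p"
      have "(\<Prod>j<p. (t i * inverse (t j)) powi e j) = t i * (\<Prod>j<p. inverse (t j) powi e j)"
        using prod_ident[of "t i" "{..<p}" e "\<lambda>j. inverse (t j)"] sum1 assms(4)[OF i] by simp
      also have "\<dots> = t i * inverse (\<Prod>j<p. t j powi e j)" by (simp add: prod_inv)
      finally have eq: "(\<Prod>j<p. (t i * inverse (t j)) powi e j) = t i * inverse (\<Prod>j<p. t j powi e j)" .
      have "is_pow (ns i) ((x * (\<Prod>i<p. t i powi e i)) powi 1)"
        by (rule pow_powi[of n]) (use H dvdn[OF i] in auto)
      hence P1: "is_pow (ns i) (x * (\<Prod>i<p. t i powi e i))" by simp
      have P2: "is_pow (ns i) (\<Prod>j<p. (t i * inverse (t j)) powi e j)"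
      proof (rule pow_prod)
        fix j assume "j \<in> {..<p}"
        hence j: "j < p" by simp
        show "is_pow (ns i) ((t i * inverse (t j)) powi e j)"
        proof (cases "i = j")
          case True
          thus ?thesis using assms(4)[OF i] by (simp add: pow_one)
        next
          case False
          have "int (ns i) dvd int (gcd (ns i) (ns j)) * e j"
          proof -
            have "int (gcd (ns i) (ns j)) * e j = c j * int (gcd (ns i) (ns j) * (n div ns j))"
              unfolding e_def by (simp only: of_nat_mult mult.left_commute)
            moreover have "int (ns i) dvd int (gcd (ns i) (ns j) * (n div ns j))"
              using key[OF i j] by (simp only: of_nat_dvd_iff)
            ultimately show ?thesis by (metis dvd_mult)
          qed
          thus ?thesis using H False i j by (intro pow_powi) auto
        qed
      qed simp
      have XE: "x * t i = (x * (\<Prod>i<p. t i powi e i)) * (t i * inverse (\<Prod>j<p. t j powi e j))"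
      proof -
        have "(\<Prod>j<p. t j powi e j) * inverse (\<Prod>j<p. t j powi e j) = 1" using posprod by (intro right_inverse) (rule less_imp_neq[symmetric])
        thus ?thesis by (simp only: mult_ac)
      qed
      show "is_pow (ns i) (x * t i)" using pow_mult[OF P1 P2] by (simp only: eq XE[symmetric])
    qed
  qed
qed

end
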